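(* Let $p\in(0,1)$ be fixed, $q=1-p$, and let $r>0$ be real. For every integer $m\ge 1$, $$f_r(n)=\frac{np}{(np+q)^{r+1}}\left\{\sum_{k=0}^{m-1}(-1)^k\frac{\mu_k(n-1)}{(np+q)^k}\binom{r+k}{r}+O\!\left(n^{-\lceil m/2\rceil}\right)\right\}\quad\text{as } n\to\infty.$$ Moreover, for each fixed $k$, $\mu_k(n-1)/(np+q)^k=O\!\left(n^{-\lceil k/2\rceil}\right)$ as $n\to\infty$.
   Context: For a positive integer $n$, $p\in(0,1)$, $q=1-p$ and real $r>0$, define $f_r(n)=\sum_{i=1}^n\binom{n}{i}p^iq^{n-i}\,i^{-r}$ (this equals $(1-q^n)\,\mathbb{E}(1/X^r)$ for $X$ a binomial$(n,p)$ variable conditioned to be positive). For integers $N\ge 0$ and $k\ge 0$, $\mu_k(N)=\sum_{i=0}^N\binom{N}{i}p^iq^{N-i}(i-Np)^k$ is the $k$-th central moment of the binomial$(N,p)$ distribution (the sum includes $i=0$). For non-integer $r$, $\binom{r+k}{r}:=(r+1)(r+2)\cdots(r+k)/k!$ (and $=1$ for $k=0$). $\lceil x\rceil$ denotes the ceiling of $x$. *)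

theory Defs
  imports Complex_Main "HOL-Library.Landau_Symbols"
begin

definition f_r :: "real \<Rightarrow> real \<Rightarrow> nat \<Rightarrow> real" where
  "f_r p r n = (\<Sum>i=1..n. real (n choose i) * p ^ i * (1 - p) ^ (n - i) / (real i) powr r)"

definition mu :: "real \<Rightarrow> nat \<Rightarrow> nat \<Rightarrow> real" where
  "mu p k N = (\<Sum>i=0..N. real (N choose i) * p ^ i * (1 - p) ^ (N - i) * (real i - real N * p) ^ k)"

text \<open>Generalized binomial coefficient binom(r+k, r) = (r+1)...(r+k)/k!, which is (r+k) gchoose k.\<close>
definition binomr :: "real \<Rightarrow> nat \<Rightarrow> real" where
  "binomr r k = (r + real k) gchoose k"

end

theory Submission
  imports Defs
begin


definition EE :: "real \<Rightarrow> nat \<Rightarrow> (nat \<Rightarrow> real) \<Rightarrow> real" where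
  "EE p N g = (\<Sum>i=0..N. real (N choose i) * p ^ i * (1 - p) ^ (N - i) * g i)"

lemma EE_Suc: "EE p (Suc N) g = (1 - p) * EE p N g + p * EE p N (\<lambda>i. g (Suc i))"
proof -
  define q where "q = 1 - p"
  have L: "EE p (Suc N) g = q ^ Suc N * g 0 + (\<Sum>i=0..N. real (Suc N choose Suc i) * p ^ Suc i * q ^ (N - i) * g (Suc i))"
    unfolding EE_def q_def sum.atLeast0_atMost_Suc_shift by (simp add: o_def)
  also have "\<dots> = q ^ Suc N * g 0 + (\<Sum>i=0..N. real (N choose Suc i) * p ^ Suc i * q ^ (N - i) * g (Suc i))
     + p * (\<Sum>i=0..N. real (N choose i) * p ^ i * q ^ (N - i) * g (Suc i))"
    by (simp add: sum_distrib_left sum.distrib[symmetric] algebra_simps)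
  finally have L2: "EE p (Suc N) g = q ^ Suc N * g 0 + (\<Sum>i=0..N. real (N choose Suc i) * p ^ Suc i * q ^ (N - i) * g (Suc i))
     + p * EE p N (\<lambda>i. g (Suc i))" unfolding EE_def q_def by simp
  have "EE p N g = (\<Sum>i=0..Suc N. real (N choose i) * p ^ i * q ^ (N - i) * g i)"
    unfolding EE_def q_def by simp
  also have "\<dots> = q ^ N * g 0 + (\<Sum>i=0..N. real (N choose Suc i) * p ^ Suc i * q ^ (N - Suc i) * g (Suc i))"
    unfolding sum.atLeast0_atMost_Suc_shift by (simp add: o_def)
  finally have R: "q * EE p N g = q ^ Suc N * g 0 + (\<Sum>i=0..N. real (N choose Suc i) * p ^ Suc i * q ^ (N - i) * g (Suc i))"
  proof -
    assume e: "EE p N g = q ^ N * g 0 + (\<Sum>i=0..N. real (N choose Suc i) * p ^ Suc i * q ^ (N - Suc i) * g (Suc i))"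
    have "q * (\<Sum>i=0..N. real (N choose Suc i) * p ^ Suc i * q ^ (N - Suc i) * g (Suc i))
       = (\<Sum>i=0..N. real (N choose Suc i) * p ^ Suc i * q ^ (N - i) * g (Suc i))"
      unfolding sum_distrib_left
    proof (rule sum.cong)
      fix i assume "i \<in> {0..N}"
      show "q * (real (N choose Suc i) * p ^ Suc i * q ^ (N - Suc i) * g (Suc i)) =
         real (N choose Suc i) * p ^ Suc i * q ^ (N - i) * g (Suc i)"
      proof (cases "i < N")
        case True
        then have "N - i = Suc (N - Suc i)" by simp
        then show ?thesis by simp
      next
        case False
        then show ?thesis by simp
      qed
    qed simp
    then show ?thesis using e by (simp add: algebra_simps)
  qed
  show ?thesis using L2 R unfolding q_def by simp
qed

lemma EE_sum: "EE p N (\<lambda>i. \<Sum>j\<in>S. f j i) = (\<Sum>j\<in>S. EE p N (f j))"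
  unfolding EE_def by (simp add: sum_distrib_left sum_distrib_right mult.assoc sum.swap[of _ S])

lemma EE_cmult: "EE p N (\<lambda>i. c * f i) = c * EE p N f"
  unfolding EE_def by (simp add: sum_distrib_left algebra_simps)

lemma EE_cmult2: "EE p N (\<lambda>i. a * f i * b) = a * b * EE p N f"
  unfolding EE_def by (simp add: sum_distrib_left algebra_simps)

lemma EE_add: "EE p N (\<lambda>i. f i + g i) = EE p N f + EE p N g"
  unfolding EE_def by (simp add: sum.distrib algebra_simps)

lemma mu_EE: "mu p k N = EE p N (\<lambda>i. (real i - real N * p) ^ k)"
  unfolding mu_def EE_def by simp

definition cc :: "real \<Rightarrow> nat \<Rightarrow> real" where
  "cc p l = (1 - p) * (- p) ^ l + p * (1 - p) ^ l"

lemma mu_Suc: "mu p k (Suc N) = (\<Sum>j\<le>k. real (k choose j) * cc p (k - j) * mu p j N)"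
proof -
  have "mu p k (Suc N) = (1 - p) * EE p N (\<lambda>i. ((real i - real N * p) + (- p)) ^ k)
      + p * EE p N (\<lambda>i. ((real i - real N * p) + (1 - p)) ^ k)"
    unfolding mu_EE EE_Suc by (simp add: algebra_simps)
  also have "\<dots> = (1 - p) * EE p N (\<lambda>i. \<Sum>j\<le>k. real (k choose j) * (real i - real N * p) ^ j * (- p) ^ (k - j))
      + p * EE p N (\<lambda>i. \<Sum>j\<le>k. real (k choose j) * (real i - real N * p) ^ j * (1 - p) ^ (k - j))"
    by (simp only: binomial_ring)
  also have "\<dots> = (1 - p) * (\<Sum>j\<le>k. real (k choose j) * (- p) ^ (k - j) * mu p j N)
      + p * (\<Sum>j\<le>k. real (k choose j) * (1 - p) ^ (k - j) * mu p j N)"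
    unfolding EE_sum mu_EE by (simp only: EE_cmult2)
  also have "\<dots> = (\<Sum>j\<le>k. real (k choose j) * cc p (k - j) * mu p j N)"
    unfolding cc_def sum_distrib_left sum.distrib[symmetric]
    by (rule sum.cong) (simp_all add: algebra_simps)
  finally show ?thesis .
qed



lemma mu_0: "mu p 0 N = 1"
proof -
  have "mu p 0 N = (p + (1 - p)) ^ N"
    unfolding mu_def binomial_ring by (simp add: atLeast0AtMost)
  then show ?thesis by simp
qed

lemma cc_0: "cc p 0 = 1" unfolding cc_def by simp
lemma cc_1: "cc p (Suc 0) = 0" unfolding cc_def by simp
lemma cc_le: assumes "0 \<le> p" "p \<le> 1" shows "\<bar>cc p l\<bar> \<le> 1"
proof -
  have "\<bar>cc p l\<bar> \<le> \<bar>(1 - p) * (- p) ^ l\<bar> + \<bar>p * (1 - p) ^ l\<bar>"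
    unfolding cc_def by (rule abs_triangle_ineq)
  also have "\<dots> = (1 - p) * p ^ l + p * (1 - p) ^ l"
    using assms by (simp add: abs_mult power_abs)
  also have "\<dots> \<le> (1 - p) * 1 + p * 1"
    using assms by (intro add_mono mult_left_mono power_le_one) auto
  finally show ?thesis by simp
qed

lemma mu_incr:
  assumes "k \<ge> 1"
  shows "mu p k (Suc N) = mu p k N + (\<Sum>j<k-1. real (k choose j) * cc p (k - j) * mu p j N)"
proof -
  obtain k' where k: "k = Suc k'" using assms by (cases k) auto
  show ?thesis unfolding mu_Suc k sum.atMost_Suc
    unfolding lessThan_Suc_atMost[symmetric] sum.lessThan_Suc
    by (simp add: cc_0 cc_1)
qed

lemma mu_bound:
  assumes "0 \<le> p" "p \<le> 1"
  shows "\<exists>C. \<forall>N. \<bar>mu p k N\<bar> \<le> C * (real N + 1) ^ (k div 2)"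
proof (induction k rule: less_induct)
  case (less k)
  then have "\<forall>j\<in>{..<k}. \<exists>C. \<forall>N. \<bar>mu p j N\<bar> \<le> C * (real N + 1) ^ (j div 2)" by blast
  then obtain Cf where Cf: "\<And>j N. j < k \<Longrightarrow> \<bar>mu p j N\<bar> \<le> Cf j * (real N + 1) ^ (j div 2)"
    by (metis bchoice lessThan_iff)
  have Cf0: "Cf j \<ge> 0" if "j < k" for j
  proof -
    have "0 \<le> Cf j * (real 0 + 1) ^ (j div 2)" using Cf[OF that, of 0] by linarith
    then show ?thesis by simp
  qed
  define D where "D = (\<Sum>j<k-1. real (k choose j) * Cf j)"
  show ?case
  proof (cases "k = 0")
    case True
    then show ?thesis by (intro exI[of _ 1]) (simp add: mu_0)
  next
    case False
    then have k1: "k \<ge> 1" by simp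
    have incr: "\<bar>mu p k (Suc N) - mu p k N\<bar> \<le> D * (real N + 1) ^ (k div 2 - 1)" for N
    proof -
      have "\<bar>mu p k (Suc N) - mu p k N\<bar> = \<bar>\<Sum>j<k-1. real (k choose j) * cc p (k - j) * mu p j N\<bar>"
        using mu_incr[OF k1] by simp
      also have "\<dots> \<le> (\<Sum>j<k-1. \<bar>real (k choose j) * cc p (k - j) * mu p j N\<bar>)"
        by (rule sum_abs)
      also have "\<dots> \<le> (\<Sum>j<k-1. real (k choose j) * Cf j * (real N + 1) ^ (k div 2 - 1))"
      proof (rule sum_mono)
        fix j assume j: "j \<in> {..<k-1}"
        then have jk: "j < k" by simp
        have "j div 2 \<le> k div 2 - 1" using j by auto
        then have pw: "(real N + 1) ^ (j div 2) \<le> (real N + 1) ^ (k div 2 - 1)"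
          by (intro power_increasing) auto
        have "\<bar>real (k choose j) * cc p (k - j) * mu p j N\<bar> = real (k choose j) * \<bar>cc p (k - j)\<bar> * \<bar>mu p j N\<bar>"
          by (simp add: abs_mult)
        also have "\<dots> \<le> real (k choose j) * 1 * (Cf j * (real N + 1) ^ (j div 2))"
          using cc_le[OF assms] Cf[OF jk] by (intro mult_mono) auto
        also have "\<dots> \<le> real (k choose j) * Cf j * (real N + 1) ^ (k div 2 - 1)"
          using pw Cf0[OF jk] by (simp add: mult.assoc mult_left_mono)
        finally show "\<bar>real (k choose j) * cc p (k - j) * mu p j N\<bar> \<le> real (k choose j) * Cf j * (real N + 1) ^ (k div 2 - 1)" .
      qed
      also have "\<dots> = D * (real N + 1) ^ (k div 2 - 1)"
        unfolding D_def by (simp add: sum_distrib_right)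
      finally show ?thesis .
    qed
    have D0: "D \<ge> 0" unfolding D_def using Cf0 by (intro sum_nonneg) auto
    have acc: "\<bar>mu p k N\<bar> \<le> \<bar>mu p k 0\<bar> + D * real N * (real N + 1) ^ (k div 2 - 1)" for N
    proof (induction N)
      case 0 then show ?case by simp
    next
      case (Suc N)
      have "(real N + 1) ^ (k div 2 - 1) \<le> (real (Suc N) + 1) ^ (k div 2 - 1)"
        by (intro power_mono) auto
      then have m: "(D * (real N + 1)) * (real N + 1) ^ (k div 2 - 1) \<le> (D * (real N + 1)) * (real (Suc N) + 1) ^ (k div 2 - 1)"
        using D0 by (intro mult_left_mono) auto
      have e: "D * real N * (real N + 1) ^ (k div 2 - 1) + D * (real N + 1) ^ (k div 2 - 1)
          = (D * (real N + 1)) * (real N + 1) ^ (k div 2 - 1)" by (simp add: algebra_simps)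
      have "D * real N * (real N + 1) ^ (k div 2 - 1) + D * (real N + 1) ^ (k div 2 - 1)
          \<le> D * real (Suc N) * (real (Suc N) + 1) ^ (k div 2 - 1)"
        using m e by (simp add: add.commute)
      then show ?case using Suc incr[of N] by linarith
    qed
    show ?thesis
    proof (cases "k < 2")
      case True
      then have "D = 0" unfolding D_def by simp
      then show ?thesis using acc True by (intro exI[of _ "\<bar>mu p k 0\<bar>"]) simp
    next
      case False
      show ?thesis
      proof (intro exI[of _ "\<bar>mu p k 0\<bar> + D"] allI)
        fix N
        have "real N * (real N + 1) ^ (k div 2 - 1) \<le> (real N + 1) * (real N + 1) ^ (k div 2 - 1)"
          by (intro mult_right_mono) auto
        also have "\<dots> = (real N + 1) ^ (k div 2)"
          using False by (metis One_nat_def Suc_pred div_greater_zero_iff not_less pos2 power_Suc)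
        finally have a: "D * (real N * (real N + 1) ^ (k div 2 - 1)) \<le> D * (real N + 1) ^ (k div 2)"
          using D0 by (rule mult_left_mono)
        have b: "\<bar>mu p k 0\<bar> \<le> \<bar>mu p k 0\<bar> * (real N + 1) ^ (k div 2)"
          by (simp add: mult_le_cancel_left1 one_le_power)
        show "\<bar>mu p k N\<bar> \<le> (\<bar>mu p k 0\<bar> + D) * (real N + 1) ^ (k div 2)"
          using acc[of N] a b by (simp add: algebra_simps)
      qed
    qed
  qed
qed




definition Rm :: "real \<Rightarrow> nat \<Rightarrow> real \<Rightarrow> real" where
  "Rm r m x = (1 + x) powr (-(r + 1)) - (\<Sum>k<m. (-1) ^ k * binomr r k * x ^ k)"

lemma binomr_poch: "binomr r k = pochhammer (r + 1) k / fact k"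
  unfolding binomr_def gbinomial_pochhammer' by simp

lemma binomr_pos: "r > 0 \<Longrightarrow> binomr r k > 0"
  unfolding binomr_poch by (intro divide_pos_pos pochhammer_pos) auto

lemma Rm_taylor:
  assumes r: "r > 0" and m: "m > 0" and x: "x > -1"
  shows "\<exists>t. min 0 x \<le> t \<and> t \<le> max 0 x \<and>
    Rm r m x = (-1) ^ m * binomr r m * (1 + t) powr (-(r + 1) - real m) * x ^ m"
proof -
  define diff where "diff k t = (-1) ^ k * pochhammer (r + 1) k * (1 + t) powr (-(r + 1) - real k)" for k t
  have D: "DERIV (diff k) t :> diff (Suc k) t" if "t > -1" for k t
  proof -
    have "DERIV (\<lambda>t. (1 + t) powr (-(r + 1) - real k)) t :> (-(r + 1) - real k) * (1 + t) powr (-(r + 1) - real k - of_nat 1) * 1"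
      using that by (intro DERIV_fun_powr) (auto intro!: derivative_eq_intros)
    then have "DERIV (diff k) t :> (-1) ^ k * pochhammer (r + 1) k * ((-(r + 1) - real k) * (1 + t) powr (-(r + 1) - real k - of_nat 1) * 1)"
      unfolding diff_def by (intro DERIV_cmult)
    moreover have "(-1) ^ k * pochhammer (r + 1) k * ((-(r + 1) - real k) * (1 + t) powr (-(r + 1) - real k - of_nat 1) * 1) = diff (Suc k) t"
      unfolding diff_def pochhammer_Suc by (simp add: algebra_simps)
    ultimately show ?thesis by simp
  qed
  have d0: "diff 0 = (\<lambda>t. (1 + t) powr (-(r + 1)))" unfolding diff_def by auto
  have dk0: "diff k 0 / fact k = (-1) ^ k * binomr r k" for k
    unfolding diff_def binomr_poch by simp
  have dm: "diff m t / fact m = (-1) ^ m * binomr r m * (1 + t) powr (-(r + 1) - real m)" for t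
    unfolding diff_def binomr_poch by simp
  consider "x = 0" | "x > 0" | "x < 0" by linarith
  then show ?thesis
  proof cases
    case 1
    then show ?thesis using m
      by (intro exI[of _ 0]) (simp add: Rm_def lessThan_Suc_atMost[symmetric] sum.lessThan_Suc_shift
           binomr_def del: sum.lessThan_Suc)
  next
    case 2
    from Maclaurin[of x m diff "\<lambda>t. (1 + t) powr (-(r + 1))", OF 2 m d0]
    obtain t where t: "0 < t" "t < x" "(1 + x) powr (-(r + 1)) = (\<Sum>k<m. diff k 0 / fact k * x ^ k) + diff m t / fact m * x ^ m"
      using D by force
    show ?thesis using t 2
      by (intro exI[of _ t]) (simp add: Rm_def dk0 dm)
  next
    case 3
    from Maclaurin_minus[of x m diff "\<lambda>t. (1 + t) powr (-(r + 1))", OF 3 m d0]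
    obtain t where t: "x < t" "t < 0" "(1 + x) powr (-(r + 1)) = (\<Sum>k<m. diff k 0 / fact k * x ^ k) + diff m t / fact m * x ^ m"
      using D x by force
    show ?thesis using t 3
      by (intro exI[of _ t]) (simp add: Rm_def dk0 dm)
  qed
qed

lemma Rm_bound:
  assumes r: "r > 0" and m: "m > 0" and A: "A \<ge> 1" and x: "x > -1" and xA: "1 + x \<ge> 1 / A"
  shows "\<bar>Rm r m x\<bar> \<le> binomr r m * 2 powr (r + 1 + m) * (\<bar>x\<bar> ^ m + A powr (r + 1 + m) * (4 ^ J * x ^ (2 * J)))"
proof -
  define E where "E = r + 1 + m"
  define B where "B = binomr r m"
  have E0: "E > 0" unfolding E_def using r by simp
  have B0: "B > 0" unfolding B_def using binomr_pos[OF r] by simp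
  obtain t where t: "min 0 x \<le> t" "t \<le> max 0 x"
    "Rm r m x = (-1) ^ m * binomr r m * (1 + t) powr (-(r + 1) - real m) * x ^ m"
    using Rm_taylor[OF r m x] by blast
  have pe: "-(r + 1) - real m = - E" unfolding E_def by simp
  have absR: "\<bar>Rm r m x\<bar> = B * (1 + t) powr (- E) * \<bar>x\<bar> ^ m"
    unfolding t(3) pe B_def using binomr_pos[OF r, of m]
    by (simp add: abs_mult power_abs)
  have nn: "0 \<le> A powr E * (4 ^ J * x ^ (2 * J))"
    by (simp add: power_mult)
  have twoE: "1 \<le> 2 powr E" using E0 by (intro ge_one_powr_ge_zero) auto
  show ?thesis
  proof (cases "x \<ge> -1/2")
    case True
    then have t2: "1 / 2 \<le> 1 + t" using t(1) by linarith
    have "(1 + t) powr (- E) \<le> (1 / 2) powr (- E)"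
      using E0 t2 by (intro powr_mono2') auto
    also have "(1 / 2) powr (- E) = 2 powr E"
      by (simp add: powr_minus_divide powr_divide)
    finally have "\<bar>Rm r m x\<bar> \<le> B * 2 powr E * \<bar>x\<bar> ^ m"
      unfolding absR using B0 by (intro mult_right_mono mult_left_mono) auto
    also have "\<dots> \<le> B * 2 powr E * (\<bar>x\<bar> ^ m + A powr E * (4 ^ J * x ^ (2 * J)))"
      using B0 nn by (intro mult_left_mono) auto
    finally show ?thesis unfolding B_def E_def by simp
  next
    case False
    have A0: "A > 0" using A by simp
    have tA: "1 / A \<le> 1 + t" using t(1) xA False by linarith
    have "(1 + t) powr (- E) \<le> (1 / A) powr (- E)"
      using E0 tA A0 by (intro powr_mono2') auto
    also have "(1 / A) powr (- E) = A powr E"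
      using A0 by (simp add: powr_minus_divide powr_divide)
    finally have p1: "(1 + t) powr (- E) \<le> A powr E" .
    have xm: "\<bar>x\<bar> ^ m \<le> 1" using x False by (intro power_le_one) auto
    have "\<bar>Rm r m x\<bar> \<le> B * A powr E * 1"
      unfolding absR using B0 p1 xm by (intro mult_mono) auto
    also have "\<dots> \<le> B * A powr E * (4 ^ J * x ^ (2 * J))"
    proof -
      have "1/2 \<le> - x" using False by simp
      then have "(1/2) ^ 2 \<le> (- x) ^ 2" by (intro power_mono) auto
      then have "1 \<le> 4 * x ^ 2" by (simp add: power2_eq_square)
      then have "1 \<le> (4 * x ^ 2) ^ J" by (rule one_le_power)
      also have "(4 * x ^ 2) ^ J = 4 ^ J * x ^ (2 * J)" by (simp add: power_mult_distrib power_mult)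
      finally show ?thesis using B0 by (intro mult_left_mono) auto
    qed
    also have "\<dots> \<le> B * 2 powr E * (A powr E * (4 ^ J * x ^ (2 * J)))"
    proof -
      have Z: "0 \<le> B * (A powr E * (4 ^ J * x ^ (2 * J)))" using B0 nn by simp
      have "1 * (B * (A powr E * (4 ^ J * x ^ (2 * J)))) \<le> 2 powr E * (B * (A powr E * (4 ^ J * x ^ (2 * J))))"
        using twoE Z by (rule mult_right_mono)
      then show ?thesis by (simp add: algebra_simps)
    qed
    also have "\<dots> \<le> B * 2 powr E * (\<bar>x\<bar> ^ m + A powr E * (4 ^ J * x ^ (2 * J)))"
      using B0 by (intro mult_left_mono) auto
    finally show ?thesis unfolding B_def E_def by simp
  qed
qed




definition RR :: "real \<Rightarrow> real \<Rightarrow> nat \<Rightarrow> nat \<Rightarrow> real" where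
  "RR p r m n = EE p (n - 1) (\<lambda>j. Rm r m ((real j - real (n - 1) * p) / (real n * p + (1 - p))))"

lemma f_r_EE:
  shows "f_r p r (Suc N) = real (Suc N) * p * EE p N (\<lambda>j. (real j + 1) powr (-(r + 1)))"
proof -
  have "f_r p r (Suc N) = (\<Sum>j=0..N. real (Suc N choose Suc j) * p ^ Suc j * (1 - p) ^ (Suc N - Suc j) / (real (Suc j)) powr r)"
    unfolding f_r_def One_nat_def sum.atLeast_Suc_atMost_Suc_shift by (simp add: o_def)
  also have "\<dots> = (\<Sum>j=0..N. real (Suc N) * p * (real (N choose j) * p ^ j * (1 - p) ^ (N - j) * (real j + 1) powr (-(r + 1))))"
  proof (rule sum.cong[OF refl])
    fix j
    have c: "real (Suc N choose Suc j) = real (Suc N) * real (N choose j) / real (Suc j)"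
    proof -
      have "real (Suc j * (Suc N choose Suc j)) = real (Suc N * (N choose j))"
        by (simp only: Suc_times_binomial)
      then have "real (Suc j) * real (Suc N choose Suc j) = real (Suc N) * real (N choose j)"
        by (simp only: of_nat_mult)
      then show ?thesis by (simp add: eq_divide_eq mult.commute del: of_nat_Suc)
    qed
    have pw: "(real j + 1) powr (-(r + 1)) = 1 / ((real j + 1) powr r * (real j + 1))"
      by (subst powr_minus_divide) (simp add: powr_add)
    show "real (Suc N choose Suc j) * p ^ Suc j * (1 - p) ^ (Suc N - Suc j) / (real (Suc j)) powr r =
        real (Suc N) * p * (real (N choose j) * p ^ j * (1 - p) ^ (N - j) * (real j + 1) powr (-(r + 1)))"
      unfolding c pw by (simp add: divide_simps ac_simps)
  qed
  also have "\<dots> = real (Suc N) * p * EE p N (\<lambda>j. (real j + 1) powr (-(r + 1)))"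
    unfolding EE_def sum_distrib_left by simp
  finally show ?thesis .
qed

lemma f_r_expand:
  fixes N :: nat and p r :: real
  assumes p: "0 < p"
  defines "a \<equiv> real (Suc N) * p + (1 - p)"
  shows "f_r p r (Suc N) = real (Suc N) * p / a powr (r + 1) *
    ((\<Sum>k<m. (-1) ^ k * mu p k (Suc N - 1) / a ^ k * binomr r k) + RR p r m (Suc N))"
proof -
  have a_eq: "a = real N * p + 1" unfolding a_def by (simp add: algebra_simps)
  have a0: "a > 0" unfolding a_eq using p by (simp add: add_nonneg_pos)
  define x where "x j = (real j - real N * p) / a" for j :: nat
  have e1: "(real j + 1) powr (-(r + 1)) = a powr (-(r + 1)) * (1 + x j) powr (-(r + 1))" for j
  proof -
    have "real j + 1 = a * (1 + x j)" unfolding x_def using a0 by (simp add: field_simps a_eq)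
    moreover have "1 + x j \<ge> 0" using \<open>real j + 1 = a * (1 + x j)\<close> a0
      by (metis add_nonneg_nonneg of_nat_0_le_iff zero_le_mult_iff zero_le_one linorder_not_le)
    ultimately show ?thesis using a0 by (simp add: powr_mult)
  qed
  have e2: "(1 + x j) powr (-(r + 1)) = (\<Sum>k<m. (-1) ^ k * binomr r k * x j ^ k) + Rm r m (x j)" for j
    unfolding Rm_def by simp
  have e3: "EE p N (\<lambda>j. x j ^ k) = mu p k N / a ^ k" for k
  proof -
    have "EE p N (\<lambda>j. x j ^ k) = EE p N (\<lambda>j. (1 / a ^ k) * (real j - real N * p) ^ k)"
      unfolding x_def by (simp add: power_divide)
    also have "\<dots> = mu p k N / a ^ k" unfolding EE_cmult mu_EE by simp
    finally show ?thesis .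
  qed
  have e4: "EE p N (\<lambda>j. \<Sum>k<m. (-1) ^ k * binomr r k * x j ^ k) = (\<Sum>k<m. (-1) ^ k * mu p k N / a ^ k * binomr r k)"
    unfolding EE_sum EE_cmult e3 by (simp add: algebra_simps)
  have e5: "RR p r m (Suc N) = EE p N (\<lambda>j. Rm r m (x j))"
    unfolding RR_def x_def a_def by simp
  have "f_r p r (Suc N) = real (Suc N) * p * EE p N (\<lambda>j. a powr (-(r + 1)) * ((\<Sum>k<m. (-1) ^ k * binomr r k * x j ^ k) + Rm r m (x j)))"
    unfolding f_r_EE e1 e2 ..
  also have "\<dots> = real (Suc N) * p * (a powr (-(r + 1)) * ((\<Sum>k<m. (-1) ^ k * mu p k N / a ^ k * binomr r k) + RR p r m (Suc N)))"
    unfolding EE_cmult EE_add e4 e5 ..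
  also have "\<dots> = real (Suc N) * p / a powr (r + 1) * ((\<Sum>k<m. (-1) ^ k * mu p k (Suc N - 1) / a ^ k * binomr r k) + RR p r m (Suc N))"
    by (subst powr_minus_divide) simp
  finally show ?thesis .
qed




lemma ceil_half: "of_int \<lceil>real k / 2\<rceil> = real (k - k div 2)"
proof (cases "even k")
  case True
  then obtain q where "k = 2 * q" by blast
  then show ?thesis by simp
next
  case False
  then obtain q where k: "k = 2 * q + 1" using oddE by blast
  have "\<lceil>real k / 2\<rceil> = int q + 1" unfolding k by (intro ceiling_unique) auto
  moreover have "k - k div 2 = q + 1" unfolding k by simp
  ultimately show ?thesis by simp
qed

lemma npowr: "real n > 0 \<Longrightarrow> real n powr (- real e) = 1 / real n ^ e"
  by (simp add: powr_minus_divide powr_realpow)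

lemma mu_ratio_bound:
  assumes p: "0 < p" "p < 1"
  shows "\<exists>c. \<forall>n\<ge>1. \<bar>mu p k (n - 1) / (real n * p + (1 - p)) ^ k\<bar> \<le> c * real n powr (- of_int \<lceil>real k / 2\<rceil>)"
proof -
  obtain C where C: "\<And>N. \<bar>mu p k N\<bar> \<le> C * (real N + 1) ^ (k div 2)"
    using mu_bound[of p k] p by auto
  show ?thesis
  proof (intro exI[of _ "C / p ^ k"] allI impI)
    fix n :: nat assume n: "n \<ge> 1"
    define a where "a = real n * p + (1 - p)"
    have n0: "real n > 0" using n by simp
    have pa: "real n * p \<le> a" unfolding a_def using p by simp
    have pn0: "real n * p > 0" using n0 p by simp
    have ak: "(real n * p) ^ k \<le> a ^ k" using pa pn0 by (intro power_mono) auto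
    have ak0: "a ^ k > 0" using pa pn0 by simp
    have mu: "\<bar>mu p k (n - 1)\<bar> \<le> C * real n ^ (k div 2)"
      using C[of "n - 1"] n by (simp add: of_nat_diff)
    have "\<bar>mu p k 0\<bar> \<le> C" using C[of 0] by simp
    then have C0: "C \<ge> 0" by linarith
    have "\<bar>mu p k (n - 1) / a ^ k\<bar> = \<bar>mu p k (n - 1)\<bar> / a ^ k" using ak0 by simp
    also have "\<dots> \<le> C * real n ^ (k div 2) / (real n * p) ^ k"
      using mu ak ak0 pn0 C0 by (intro frac_le) auto
    also have "\<dots> = C / p ^ k * (real n ^ (k div 2) / real n ^ k)"
      by (simp add: power_mult_distrib)
    also have "real n ^ (k div 2) / real n ^ k = 1 / real n ^ (k - k div 2)"
    proof -
      have "real n ^ k = real n ^ (k div 2) * real n ^ (k - k div 2)"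
        by (simp add: power_add[symmetric])
      then show ?thesis using n0 by simp
    qed
    also have "1 / real n ^ (k - k div 2) = real n powr (- of_int \<lceil>real k / 2\<rceil>)"
      unfolding ceil_half npowr[OF n0] by (rule refl)
    finally show "\<bar>mu p k (n - 1) / (real n * p + (1 - p)) ^ k\<bar> \<le> C / p ^ k * real n powr (- of_int \<lceil>real k / 2\<rceil>)"
      unfolding a_def .
  qed
qed

lemma ev_ge1: "(\<forall>n\<ge>1. P (n::nat)) \<Longrightarrow> eventually P at_top"
  unfolding eventually_at_top_linorder by blast

lemma mu_ratio_O:
  assumes p: "0 < p" "p < 1"
  shows "(\<lambda>n. mu p k (n - 1) / (real n * p + (1 - p)) ^ k) \<in> O[at_top](\<lambda>n. real n powr (- of_int \<lceil>real k / 2\<rceil>))"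
proof -
  obtain c where c: "\<And>n. n \<ge> 1 \<Longrightarrow> \<bar>mu p k (n - 1) / (real n * p + (1 - p)) ^ k\<bar> \<le> c * real n powr (- of_int \<lceil>real k / 2\<rceil>)"
    using mu_ratio_bound[OF p] by blast
  show ?thesis
    by (rule bigoI[of _ c]) (intro ev_ge1 allI impI, use c in auto)
qed

lemma EE_abs: assumes "0 \<le> p" "p \<le> 1" shows "\<bar>EE p N f\<bar> \<le> EE p N (\<lambda>j. \<bar>f j\<bar>)"
proof -
  have "\<bar>EE p N f\<bar> \<le> (\<Sum>i=0..N. \<bar>real (N choose i) * p ^ i * (1 - p) ^ (N - i) * f i\<bar>)"
    unfolding EE_def by (rule sum_abs)
  also have "\<dots> = EE p N (\<lambda>j. \<bar>f j\<bar>)"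
    unfolding EE_def using assms by (intro sum.cong) (auto simp: abs_mult)
  finally show ?thesis .
qed

lemma EE_mono: assumes "0 \<le> p" "p \<le> 1" "\<And>j. f j \<le> g j" shows "EE p N f \<le> EE p N g"
  unfolding EE_def using assms by (intro sum_mono mult_left_mono) auto

lemma RR_even_bound:
  assumes p: "0 < p" "p < 1" and r: "r > 0" and m: "m > 0" "even m"
  shows "\<exists>c. \<forall>n\<ge>1. \<bar>RR p r m n\<bar> \<le> c * real n powr (- of_int \<lceil>real m / 2\<rceil>)"
proof -
  define J where "J = nat \<lceil>r\<rceil> + 1 + 2 * m"
  define E where "E = r + 1 + m"
  define K where "K = binomr r m * 2 powr E"
  have K0: "K \<ge> 0" unfolding K_def using binomr_pos[OF r, of m] by simp
  have ceilm: "of_int \<lceil>real m / 2\<rceil> = real (m div 2)"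
    unfolding ceil_half using m by (metis dvd_mult_div_cancel mult_2 add_diff_cancel_right' )
  obtain c1 where c1: "\<And>n. n \<ge> 1 \<Longrightarrow> \<bar>mu p m (n - 1) / (real n * p + (1 - p)) ^ m\<bar> \<le> c1 * real n powr (- of_int \<lceil>real m / 2\<rceil>)"
    using mu_ratio_bound[OF p, of m] by blast
  obtain C where C: "\<And>N. \<bar>mu p (2 * J) N\<bar> \<le> C * (real N + 1) ^ ((2 * J) div 2)"
    using mu_bound[of p "2 * J"] p by auto
  have "\<bar>mu p (2 * J) 0\<bar> \<le> C" using C[of 0] by simp
  then have C0: "C \<ge> 0" by linarith
  have EJ: "E - real J \<le> - real (m div 2)"
  proof -
    have "real (nat \<lceil>r\<rceil>) \<ge> r" by linarith
    moreover have "real (m div 2) \<le> real m" by simp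
    ultimately show ?thesis unfolding E_def J_def by simp
  qed
  have E2J: "E - 2 * real J \<le> 0" using EJ unfolding E_def by simp
  define c where "c = K * (c1 + 4 ^ J * C * p powr (E - 2 * real J))"
  show ?thesis
  proof (intro exI[of _ c] allI impI)
    fix n :: nat assume n: "n \<ge> 1"
    then obtain N where nN: "n = Suc N" by (cases n) auto
    define a where "a = real n * p + (1 - p)"
    have a_eq: "a = real N * p + 1" unfolding a_def nN by (simp add: algebra_simps)
    have a1: "a \<ge> 1" unfolding a_eq using p by simp
    have n0: "real n > 0" using n by simp
    have pa: "real n * p \<le> a" unfolding a_def using p by simp
    have pn0: "real n * p > 0" using n0 p by simp
    define x where "x j = (real j - real N * p) / a" for j :: nat
    have xb: "x j > -1" "1 + x j \<ge> 1 / a" for j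
    proof -
      have "1 + x j = (real j + 1) / a" unfolding x_def using a1 by (simp add: field_simps a_eq)
      moreover have "(real j + 1) / a \<ge> 1 / a" using a1 by (intro divide_right_mono) auto
      moreover have "1 / a > 0" using a1 by simp
      ultimately show "x j > -1" "1 + x j \<ge> 1 / a" by linarith+
    qed
    have RRx: "RR p r m n = EE p N (\<lambda>j. Rm r m (x j))"
      unfolding RR_def x_def a_def nN by simp
    have ex: "EE p N (\<lambda>j. x j ^ k) = mu p k N / a ^ k" for k
    proof -
      have "EE p N (\<lambda>j. x j ^ k) = EE p N (\<lambda>j. (1 / a ^ k) * (real j - real N * p) ^ k)"
        unfolding x_def by (simp add: power_divide)
      also have "\<dots> = mu p k N / a ^ k" unfolding EE_cmult mu_EE by simp
      finally show ?thesis .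
    qed
    have "\<bar>RR p r m n\<bar> \<le> EE p N (\<lambda>j. \<bar>Rm r m (x j)\<bar>)"
      unfolding RRx using p by (intro EE_abs) auto
    also have "\<dots> \<le> EE p N (\<lambda>j. K * (x j ^ m + a powr E * 4 ^ J * x j ^ (2 * J)))"
    proof (rule EE_mono)
      fix j
      have "\<bar>x j\<bar> ^ m = x j ^ m" using m(2) by (simp add: power_even_abs)
      then show "\<bar>Rm r m (x j)\<bar> \<le> K * (x j ^ m + a powr E * 4 ^ J * x j ^ (2 * J))"
        using Rm_bound[OF r m(1) a1 xb(1)[of j] xb(2)[of j], where J=J] unfolding K_def E_def by (simp add: mult.assoc)
    qed (use p in auto)
    also have "\<dots> = K * (mu p m N / a ^ m + a powr E * 4 ^ J * (mu p (2 * J) N / a ^ (2 * J)))"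
      unfolding EE_cmult EE_add ex by simp
    also have "\<dots> \<le> K * (c1 * real n powr (- of_int \<lceil>real m / 2\<rceil>) + 4 ^ J * C * p powr (E - 2 * real J) * real n powr (- of_int \<lceil>real m / 2\<rceil>))"
    proof (rule mult_left_mono[OF add_mono K0])
      show "mu p m N / a ^ m \<le> c1 * real n powr (- of_int \<lceil>real m / 2\<rceil>)"
        using order_trans[OF abs_ge_self c1[OF n]] unfolding a_def nN by simp
      have a0: "a > 0" using a1 by simp
      have muJ: "mu p (2 * J) N \<le> C * real n ^ J"
        using C[of N] unfolding nN by (simp add: add.commute)
      have "a powr E * 4 ^ J * (mu p (2 * J) N / a ^ (2 * J)) = 4 ^ J * (mu p (2 * J) N * a powr (E - 2 * real J))"
        using a0 by (simp add: powr_diff powr_realpow[symmetric])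
      also have "\<dots> \<le> 4 ^ J * ((C * real n ^ J) * ((real n * p) powr (E - 2 * real J)))"
      proof -
        have "a powr (E - 2 * real J) \<le> (real n * p) powr (E - 2 * real J)"
          using E2J pn0 pa by (rule powr_mono2')
        moreover have "mu p (2 * J) N \<le> C * real n ^ J" by (rule muJ)
        ultimately have "mu p (2 * J) N * a powr (E - 2 * real J) \<le> (C * real n ^ J) * ((real n * p) powr (E - 2 * real J))"
          by (meson C0 mult_left_mono mult_right_mono order_trans powr_ge_zero zero_le_mult_iff zero_le_power of_nat_0_le_iff)
        then show ?thesis by simp
      qed
      also have "\<dots> = 4 ^ J * C * p powr (E - 2 * real J) * (real n powr (real J) * real n powr (E - 2 * real J))"
        using n0 p by (simp add: powr_mult powr_realpow)
      also have "real n powr (real J) * real n powr (E - 2 * real J) = real n powr (E - real J)"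
        by (simp add: powr_add[symmetric])
      also have "real n powr (E - real J) \<le> real n powr (- of_int \<lceil>real m / 2\<rceil>)"
        unfolding ceilm using EJ n by (intro powr_mono) auto
      finally show "a powr E * 4 ^ J * (mu p (2 * J) N / a ^ (2 * J)) \<le> 4 ^ J * C * p powr (E - 2 * real J) * real n powr (- of_int \<lceil>real m / 2\<rceil>)"
        using C0 p by (simp add: mult_left_mono)
    qed
    also have "\<dots> = c * real n powr (- of_int \<lceil>real m / 2\<rceil>)"
      unfolding c_def by (simp add: algebra_simps)
    finally show "\<bar>RR p r m n\<bar> \<le> c * real n powr (- of_int \<lceil>real m / 2\<rceil>)" .
  qed
qed




lemma RR_step: "RR p r m n = (-1) ^ m * binomr r m * (mu p m (n - 1) / (real n * p + (1 - p)) ^ m) + RR p r (Suc m) n"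
proof -
  define a where "a = real n * p + (1 - p)"
  define x where "x j = (real j - real (n - 1) * p) / a" for j :: nat
  have ex: "EE p (n - 1) (\<lambda>j. x j ^ m) = mu p m (n - 1) / a ^ m"
  proof -
    have "EE p (n - 1) (\<lambda>j. x j ^ m) = EE p (n - 1) (\<lambda>j. (1 / a ^ m) * (real j - real (n - 1) * p) ^ m)"
      unfolding x_def by (simp add: power_divide)
    also have "\<dots> = mu p m (n - 1) / a ^ m" unfolding EE_cmult mu_EE by simp
    finally show ?thesis .
  qed
  have "RR p r m n = EE p (n - 1) (\<lambda>j. (-1) ^ m * binomr r m * x j ^ m + Rm r (Suc m) (x j))"
    unfolding RR_def x_def a_def Rm_def by simp
  also have "\<dots> = (-1) ^ m * binomr r m * (mu p m (n - 1) / a ^ m) + RR p r (Suc m) n"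
    unfolding EE_add EE_cmult ex unfolding RR_def x_def a_def by simp
  finally show ?thesis unfolding a_def .
qed

lemma RR_bound:
  assumes p: "0 < p" "p < 1" and r: "r > 0" and m: "m \<ge> 1"
  shows "\<exists>c. \<forall>n\<ge>1. \<bar>RR p r m n\<bar> \<le> c * real n powr (- of_int \<lceil>real m / 2\<rceil>)"
proof (cases "even m")
  case True
  then show ?thesis using RR_even_bound[OF p r _ True] m by simp
next
  case False
  obtain c2 where c2: "\<And>n. n \<ge> 1 \<Longrightarrow> \<bar>RR p r (Suc m) n\<bar> \<le> c2 * real n powr (- of_int \<lceil>real (Suc m) / 2\<rceil>)"
    using RR_even_bound[OF p r, of "Suc m"] False by auto
  obtain c1 where c1: "\<And>n. n \<ge> 1 \<Longrightarrow> \<bar>mu p m (n - 1) / (real n * p + (1 - p)) ^ m\<bar> \<le> c1 * real n powr (- of_int \<lceil>real m / 2\<rceil>)"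
    using mu_ratio_bound[OF p, of m] by blast
  have cc: "of_int \<lceil>real (Suc m) / 2\<rceil> = (of_int \<lceil>real m / 2\<rceil> :: real)"
  proof -
    obtain q where "m = 2 * q + 1" using False oddE by blast
    then have "Suc m - Suc m div 2 = m - m div 2" by simp
    then show ?thesis unfolding ceil_half by simp
  qed
  define B where "B = \<bar>binomr r m\<bar>"
  show ?thesis
  proof (intro exI[of _ "B * c1 + c2"] allI impI)
    fix n :: nat assume n: "n \<ge> 1"
    define T where "T = mu p m (n - 1) / (real n * p + (1 - p)) ^ m"
    have "\<bar>RR p r m n\<bar> = \<bar>(-1) ^ m * binomr r m * T + RR p r (Suc m) n\<bar>"
      unfolding T_def by (subst RR_step) (rule refl)
    also have "\<dots> \<le> \<bar>(-1) ^ m * binomr r m * T\<bar> + \<bar>RR p r (Suc m) n\<bar>"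
      by (rule abs_triangle_ineq)
    also have "\<bar>(-1) ^ m * binomr r m * T\<bar> = B * \<bar>T\<bar>"
      unfolding B_def by (simp add: abs_mult)
    finally have "\<bar>RR p r m n\<bar> \<le> B * \<bar>mu p m (n - 1) / (real n * p + (1 - p)) ^ m\<bar> + \<bar>RR p r (Suc m) n\<bar>"
      unfolding T_def .
    also have "\<dots> \<le> B * (c1 * real n powr (- of_int \<lceil>real m / 2\<rceil>)) + c2 * real n powr (- of_int \<lceil>real m / 2\<rceil>)"
      using c1[OF n] c2[OF n] unfolding cc B_def by (intro add_mono mult_left_mono) auto
    finally show "\<bar>RR p r m n\<bar> \<le> (B * c1 + c2) * real n powr (- of_int \<lceil>real m / 2\<rceil>)"
      by (simp add: algebra_simps)
  qed
qed

theorem theorem1: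
  fixes p r :: real
  assumes "0 < p" "p < 1" "0 < r"
  shows "(\<forall>m::nat. m \<ge> 1 \<longrightarrow>
           (\<exists>R :: nat \<Rightarrow> real.
              R \<in> O[at_top](\<lambda>n. real n powr (- of_int \<lceil>real m / 2\<rceil>)) \<and>
              (\<forall>\<^sub>F n in at_top.
                 f_r p r n = real n * p / (real n * p + (1 - p)) powr (r + 1) *
                   ((\<Sum>k<m. (-1) ^ k * mu p k (n - 1) / (real n * p + (1 - p)) ^ k * binomr r k)
                    + R n))))
       \<and> (\<forall>k::nat. (\<lambda>n. mu p k (n - 1) / (real n * p + (1 - p)) ^ k)
              \<in> O[at_top](\<lambda>n. real n powr (- of_int \<lceil>real k / 2\<rceil>)))"
proof (intro conjI allI impI)
  fix k :: nat
  show "(\<lambda>n. mu p k (n - 1) / (real n * p + (1 - p)) ^ k) \<in> O[at_top](\<lambda>n. real n powr (- of_int \<lceil>real k / 2\<rceil>))"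
    using mu_ratio_O assms by blast
next
  fix m :: nat assume m: "m \<ge> 1"
  obtain c where c: "\<And>n. n \<ge> 1 \<Longrightarrow> \<bar>RR p r m n\<bar> \<le> c * real n powr (- of_int \<lceil>real m / 2\<rceil>)"
    using RR_bound[OF assms(1,2,3) m] by blast
  show "\<exists>R :: nat \<Rightarrow> real.
              R \<in> O[at_top](\<lambda>n. real n powr (- of_int \<lceil>real m / 2\<rceil>)) \<and>
              (\<forall>\<^sub>F n in at_top.
                 f_r p r n = real n * p / (real n * p + (1 - p)) powr (r + 1) *
                   ((\<Sum>k<m. (-1) ^ k * mu p k (n - 1) / (real n * p + (1 - p)) ^ k * binomr r k)
                    + R n))"
  proof (intro exI[of _ "RR p r m"] conjI)
    show "RR p r m \<in> O[at_top](\<lambda>n. real n powr (- of_int \<lceil>real m / 2\<rceil>))"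
      by (rule bigoI[of _ c]) (intro ev_ge1 allI impI, use c in auto)
    show "\<forall>\<^sub>F n in at_top. f_r p r n = real n * p / (real n * p + (1 - p)) powr (r + 1) *
                   ((\<Sum>k<m. (-1) ^ k * mu p k (n - 1) / (real n * p + (1 - p)) ^ k * binomr r k)
                    + RR p r m n)"
    proof (intro ev_ge1 allI impI)
      fix n :: nat assume "n \<ge> 1"
      then obtain N where "n = Suc N" by (cases n) auto
      then show "f_r p r n = real n * p / (real n * p + (1 - p)) powr (r + 1) *
                   ((\<Sum>k<m. (-1) ^ k * mu p k (n - 1) / (real n * p + (1 - p)) ^ k * binomr r k)
                    + RR p r m n)"
        using f_r_expand[OF assms(1), where N=N and r=r and m=m] by simp
    qed
  qed
qed


end
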